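(* Let $p\in(1,5)$ and consider the third-order ordinary differential equation $\mathcal{L}u=0$ on $\mathbb{R}$, where $\mathcal{L}=\partial_x(-\partial_x^2+1-p\,\phi^{p-1})$. Its space of solutions is spanned by $\{\phi',h_2,h_3\}$, where $h_2,h_3$ are even functions satisfying $\lim_{x\to+\infty}h_2(x)=1$ and $\lim_{x\to+\infty}h_3(x)=\infty$. In particular, there is no solution $u$ of $\mathcal{L}u=0$ with $\lim_{x\to-\infty}u(x)=1$ and $\lim_{x\to+\infty}|u(x)|=\infty$.
   Context: $\phi(x)=\left(\frac{p+1}{2}\right)^{\frac1{p-1}}\mathrm{sech}^{\frac2{p-1}}\left(\frac{p-1}2x\right)$. *)

theory Defs
  imports "HOL-Analysis.Analysis"
begin

definition sech :: "real \<Rightarrow> real" where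
  "sech x = 1 / cosh x"

definition phi :: "real \<Rightarrow> real \<Rightarrow> real" where
  "phi p x = ((p + 1) / 2) powr (1 / (p - 1)) * (sech ((p - 1) / 2 * x)) powr (2 / (p - 1))"

definition Lsol :: "real \<Rightarrow> (real \<Rightarrow> real) \<Rightarrow> bool" where
  "Lsol p u \<longleftrightarrow>
     (\<forall>x. u differentiable at x) \<and>
     (\<forall>x. deriv u differentiable at x) \<and>
     (\<forall>x. deriv (deriv u) differentiable at x) \<and>
     (\<forall>x. ((\<lambda>y. - deriv (deriv u) y + u y - p * (phi p y) powr (p - 1) * u y)
             has_real_derivative 0) (at x))"

end

theory Submission
  imports Defs "HOL-Real_Asymp.Real_Asymp"
begin
lemma antideriv_exists:
  fixes f :: "real \<Rightarrow> real"
  assumes "continuous_on UNIV f"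
  shows "\<exists>F. F 0 = 0 \<and> (\<forall>x. (F has_real_derivative f x) (at x))"
proof -
  define F where "F = (\<lambda>u::real. LBINT y=0..u. f y)"
  have "F 0 = 0" by (simp add: F_def zero_ereal_def)
  moreover have "(F has_real_derivative f x) (at x)" for x
  proof -
  let ?a = "-(\<bar>x\<bar>+1)" and ?b = "\<bar>x\<bar>+1"
  have "(F has_vector_derivative (f x)) (at x within {?a..?b})"
    using interval_integral_FTC2[of "?a" 0 "?b" f x] continuous_on_subset[OF assms] by (simp add: zero_ereal_def F_def)
  then have "(F has_real_derivative (f x)) (at x within {?a..?b})"
    by (simp add: has_real_derivative_iff_has_vector_derivative)
  moreover have "at x within {?a..?b} = at x"
    by (rule at_within_Icc_at) auto
  ultimately show ?thesis by simp
  qed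
  ultimately show ?thesis by blast
qed

locale solp = fixes p :: real assumes p1: "1 < p"
begin

definition "bt = (p-1)/2"
definition "aa = 2/(p-1)"
definition "AA = ((p+1)/2) powr (1/(p-1))"
definition "ka = p*(p+1)/2"
definition "Cf x = cosh (bt*x)"
definition "Tf x = tanh (bt*x)"
definition "Pf x = Cf x powr (-aa)"
definition "Vf x = ka * (1 - Tf x ^ 2)"
definition "sol2 u u1 c \<longleftrightarrow> (\<forall>x. (u has_real_derivative u1 x) (at x) \<and>
    (u1 has_real_derivative ((1 - Vf x) * u x - c)) (at x))"

lemma bt_pos: "bt > 0" using p1 by (simp add: bt_def)
lemma aa_pos: "aa > 0" using p1 by (simp add: aa_def)
lemma aa_bt: "aa * bt = 1" using p1 by (simp add: aa_def bt_def)
lemma ka_bt: "ka = (1+bt)*(1+2*bt)" unfolding ka_def bt_def by (simp add: field_simps)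
lemma ka_pos: "ka > 0" using p1 by (simp add: ka_def)
lemma Cf_pos: "Cf x > 0" by (simp add: Cf_def)
lemma Cf_ne0: "Cf x \<noteq> 0" using Cf_pos[of x] by simp
lemma Cf_ge1: "Cf x \<ge> 1" by (simp add: Cf_def cosh_real_ge_1)
lemma Tf_sq: "1 - Tf x ^ 2 = 1 / Cf x ^ 2"
proof -
  have c: "cosh (bt*x) ^ 2 - sinh (bt*x) ^ 2 = 1" using cosh_square_eq[of "bt*x"] by simp
  have "1 - (sinh (bt*x) / cosh (bt*x)) ^ 2 = (cosh (bt*x) ^ 2 - sinh (bt*x) ^ 2) / cosh (bt*x) ^ 2"
    using cosh_real_pos[of "bt*x"] by (simp add: power_divide field_simps del: cosh_real_pos)
  then show ?thesis unfolding Tf_def Cf_def tanh_def c by simp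
qed

lemma Cf_deriv: "(Cf has_real_derivative bt * sinh (bt*x)) (at x)"
  unfolding Cf_def by (auto intro!: derivative_eq_intros)
lemma Tf_deriv: "(Tf has_real_derivative bt * (1 - Tf x ^ 2)) (at x)"
  unfolding Tf_def by (auto intro!: derivative_eq_intros)
lemma Pf_deriv: "(Pf has_real_derivative - Pf x * Tf x) (at x)"
proof -
  have "(Pf has_real_derivative (-aa) * Cf x powr (-aa - 1) * (bt * sinh (bt*x))) (at x)"
    unfolding Pf_def by (auto intro!: derivative_eq_intros Cf_deriv simp: Cf_pos)
  moreover have "(-aa) * Cf x powr (-aa - 1) * (bt * sinh (bt*x)) = - Pf x * Tf x"
  proof -
    have "Cf x powr (-aa - 1) = Pf x / Cf x"
      using Cf_pos[of x] by (simp add: Pf_def powr_diff)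
    moreover have "Tf x = sinh (bt*x) / Cf x" by (simp add: Tf_def tanh_def Cf_def)
    ultimately show ?thesis using aa_bt
      by (simp add: algebra_simps)
  qed
  ultimately show ?thesis by simp
qed

lemma Pf_pos: "Pf x > 0" using Cf_pos[of x] by (simp add: Pf_def)
lemma Pf_0: "Pf 0 = 1" by (simp add: Pf_def Cf_def)
lemma Tf_0: "Tf 0 = 0" by (simp add: Tf_def)

lemma phi_eq: "phi p x = AA * Pf x"
proof -
  have "sech (bt*x) powr aa = Cf x powr (-aa)"
    by (simp add: sech_def Cf_def powr_divide powr_minus_divide)
  then show ?thesis by (simp add: phi_def AA_def Pf_def bt_def aa_def)
qed

lemma V_eq: "p * phi p x powr (p-1) = Vf x"
proof -
  have "phi p x powr (p-1) = AA powr (p-1) * Pf x powr (p-1)"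
    using Pf_pos[of x] by (simp add: phi_eq powr_mult AA_def)
  also have "AA powr (p-1) = (p+1)/2"
    using p1 by (simp add: AA_def powr_powr)
  also have "Pf x powr (p-1) = Cf x powr (-2)"
  proof -
    have "p - 1 \<noteq> 0" using p1 by simp
    then have "-aa * (p-1) = -2" by (simp add: aa_def field_simps)
    then show ?thesis by (simp add: Pf_def powr_powr)
  qed
  also have "Cf x powr (-2) = 1 / Cf x ^ 2"
    using Cf_pos[of x] by (simp add: powr_minus_divide powr_numeral)
  finally show ?thesis by (simp add: Vf_def Tf_sq ka_def)
qed

lemma Vf_bounds: "0 \<le> Vf x" "Vf x \<le> ka"
proof -
  have "1 / Cf x ^ 2 \<le> 1" using Cf_ge1[of x] by (simp add: divide_le_eq one_le_power)
  then have "0 \<le> 1 - Tf x ^ 2" "1 - Tf x ^ 2 \<le> 1" using Tf_sq[of x] by auto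
  then show "0 \<le> Vf x" "Vf x \<le> ka" using ka_pos by (auto simp: Vf_def mult_left_le)
qed

lemma Vf_deriv: "(Vf has_real_derivative ka * (- (2 * Tf x * (bt * (1 - Tf x ^ 2))))) (at x)"
  unfolding Vf_def by (auto intro!: derivative_eq_intros Tf_deriv)

lemma Lsol_of_sol2:
  assumes "sol2 u u1 c" shows "Lsol p u"
proof -
  have d1: "\<And>x. (u has_real_derivative u1 x) (at x)" and
       d2: "\<And>x. (u1 has_real_derivative ((1 - Vf x) * u x - c)) (at x)"
    using assms by (auto simp: sol2_def)
  have du: "deriv u = u1" using d1 by (auto intro!: ext DERIV_imp_deriv)
  have ddu: "deriv u1 = (\<lambda>x. (1 - Vf x) * u x - c)" using d2 by (auto intro!: ext DERIV_imp_deriv)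
  have "(\<lambda>x. (1 - Vf x) * u x - c) differentiable at x" for x
    unfolding real_differentiable_def
    apply (rule exI)
    apply (rule derivative_eq_intros Vf_deriv d1 refl)+
    done
  moreover have "((\<lambda>y. - deriv (deriv u) y + u y - p * (phi p y) powr (p - 1) * u y)
             has_real_derivative 0) (at x)" for x
  proof -
    have "(\<lambda>y. - deriv (deriv u) y + u y - p * (phi p y) powr (p - 1) * u y) = (\<lambda>y. c)"
      by (auto simp: du ddu V_eq algebra_simps)
    then show ?thesis by simp
  qed
  moreover have "u differentiable at x" "u1 differentiable at x" for x
    using d1 d2 unfolding real_differentiable_def by blast+
  ultimately show ?thesis
    unfolding Lsol_def du ddu by blast
qed

lemma sol2_of_Lsol:
  assumes "Lsol p u" shows "\<exists>c. sol2 u (deriv u) c"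
proof -
  let ?F = "\<lambda>y. - deriv (deriv u) y + u y - p * (phi p y) powr (p - 1) * u y"
  have F0: "\<And>x. (?F has_real_derivative 0) (at x)" using assms by (simp add: Lsol_def)
  have Fc: "?F x = ?F 0" for x using DERIV_isconst_all[of ?F x 0] F0 by blast
  have "sol2 u (deriv u) (?F 0)"
    unfolding sol2_def
  proof
    fix x
    have "(u has_real_derivative deriv u x) (at x)"
      using assms by (simp add: Lsol_def DERIV_deriv_iff_real_differentiable)
    moreover have "(deriv u has_real_derivative deriv (deriv u) x) (at x)"
      using assms by (simp add: Lsol_def DERIV_deriv_iff_real_differentiable)
    moreover have "deriv (deriv u) x = (1 - Vf x) * u x - ?F 0"
      using Fc[of x] V_eq[of x] by (simp add: algebra_simps)
    ultimately show "(u has_real_derivative deriv u x) (at x) \<and>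
      (deriv u has_real_derivative (1 - Vf x) * u x - ?F 0) (at x)" by simp
  qed
  then show ?thesis by blast
qed

lemma sol2_lin:
  assumes "sol2 u du c" "sol2 v dv d"
  shows "sol2 (\<lambda>x. r * u x + s * v x) (\<lambda>x. r * du x + s * dv x) (r*c + s*d)"
  using assms unfolding sol2_def
  by (auto intro!: derivative_eq_intros simp: algebra_simps)

lemma sol2_unique:
  assumes "sol2 w dw 0" "w 0 = 0" "dw 0 = 0"
  shows "w x = 0"
proof -
  define M where "M = 2 + ka"
  have Mpos: "M > 0" using ka_pos by (simp add: M_def)
  define E where "E y = (w y)^2 + (dw y)^2" for y
  have dE: "(E has_real_derivative 2 * w y * dw y * (2 - Vf y)) (at y)" for y
    using assms(1) unfolding sol2_def E_def
    by (auto intro!: derivative_eq_intros simp: algebra_simps power2_eq_square)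
  have bnd: "\<bar>2 * w y * dw y * (2 - Vf y)\<bar> \<le> M * E y" for y
  proof -
    have a: "\<bar>2 * w y * dw y\<bar> \<le> E y"
    proof -
      have "0 \<le> (\<bar>w y\<bar> - \<bar>dw y\<bar>)^2" by simp
      also have "\<dots> = E y - 2 * \<bar>w y\<bar> * \<bar>dw y\<bar>"
        by (simp add: E_def power2_eq_square algebra_simps)
      finally show ?thesis by (simp add: abs_mult)
    qed
    have b: "\<bar>2 - Vf y\<bar> \<le> M" using Vf_bounds[of y] by (simp add: M_def)
    have "\<bar>2 * w y * dw y * (2 - Vf y)\<bar> = \<bar>2 * w y * dw y\<bar> * \<bar>2 - Vf y\<bar>" by (simp add: abs_mult)
    also have "\<dots> \<le> E y * M" using a b by (intro mult_mono) auto
    finally show ?thesis by (simp add: mult.commute)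
  qed
  have E0: "E 0 = 0" using assms by (simp add: E_def)
  have Enn: "E y \<ge> 0" for y by (simp add: E_def)
  have "E x = 0"
  proof (cases "x \<ge> 0")
    case True
    define G where "G y = E y * exp (- M * y)" for y
    have "G x \<le> G 0"
    proof (rule DERIV_nonpos_imp_nonincreasing[OF True])
      fix y assume "0 \<le> y" "y \<le> x"
      have "(G has_real_derivative (2 * w y * dw y * (2 - Vf y) - M * E y) * exp (- M * y)) (at y)"
        unfolding G_def by (auto intro!: derivative_eq_intros dE simp: algebra_simps)
      moreover have "(2 * w y * dw y * (2 - Vf y) - M * E y) * exp (- M * y) \<le> 0"
        using bnd[of y] by (intro mult_nonpos_nonneg) auto
      ultimately show "\<exists>d. (G has_real_derivative d) (at y) \<and> d \<le> 0" by blast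
    qed
    then have "E x * exp (- M * x) \<le> 0" by (simp add: G_def E0)
    then show ?thesis using Enn[of x] by (simp add: mult_le_0_iff)
  next
    case False
    define G where "G y = E y * exp (M * y)" for y
    have "G x \<le> G 0"
    proof (rule DERIV_nonneg_imp_nondecreasing[of x 0 G])
      show "x \<le> 0" using False by simp
      fix y assume "x \<le> y" "y \<le> 0"
      have "(G has_real_derivative (2 * w y * dw y * (2 - Vf y) + M * E y) * exp (M * y)) (at y)"
        unfolding G_def by (auto intro!: derivative_eq_intros dE simp: algebra_simps)
      moreover have "(2 * w y * dw y * (2 - Vf y) + M * E y) * exp (M * y) \<ge> 0"
        using bnd[of y] by (intro mult_nonneg_nonneg) auto
      ultimately show "\<exists>d. (G has_real_derivative d) (at y) \<and> d \<ge> 0" by blast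
    qed
    then have "E x * exp (M * x) \<le> 0" by (simp add: G_def E0)
    then show ?thesis using Enn[of x] by (simp add: mult_le_0_iff)
  qed
  then show ?thesis unfolding E_def by (simp add: add_nonneg_eq_0_iff)
qed

end

lemma deriv_prod_zero:
  fixes f g :: "real \<Rightarrow> real"
  assumes "f a = 0" "(f has_real_derivative D) (at a)" "isCont g a"
  shows "((\<lambda>y. f y * g y) has_real_derivative D * g a) (at a)"
proof -
  have "((\<lambda>y. (f y - f a) / (y - a)) \<longlongrightarrow> D) (at a)"
    using assms(2) by (simp add: has_field_derivative_iff)
  moreover have "(g \<longlongrightarrow> g a) (at a)" using assms(3) by (simp add: isCont_def)
  ultimately have "((\<lambda>y. (f y - f a) / (y - a) * g y) \<longlongrightarrow> D * g a) (at a)"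
    by (rule tendsto_mult)
  then show ?thesis using assms(1)
    by (simp add: has_field_derivative_iff)
qed

lemma powr_plus1: "(x::real) > 0 \<Longrightarrow> x powr (a+1) = x powr a * x"
  by (simp add: powr_add)
lemma powr_plus2: "(x::real) > 0 \<Longrightarrow> x powr (a+2) = x powr a * x^2"
  by (simp add: powr_add powr_numeral)

lemma alg_TM: "(s::real) \<noteq> 0 \<Longrightarrow> c \<noteq> 0 \<Longrightarrow> (s/c)*((s/c)*(bt*(E2*c^2 - 1)/s^2)) = bt*(E2 - 1/c^2)"
  by (simp add: field_simps power2_eq_square)

lemma alg_q0: "(s::real) \<noteq> 0 \<Longrightarrow> c \<noteq> 0 \<Longrightarrow> bt \<noteq> 0 \<Longrightarrow> e * X = (2*e) * (X * c) * (bt * s) / (2 * s * (bt * c))"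
  by (simp add: field_simps)

context solp begin

definition "qf e x = (if x = 0 then bt*e else bt*(Cf x powr (2*e) - 1)/(sinh(bt*x))^2)"

lemma ev_ne0: "eventually (\<lambda>y. y \<noteq> 0) (at (0::real))"
  by (simp add: eventually_at_filter)

lemma qf_lim0: "((\<lambda>y. (Cf y powr (2*e) - 1) / (sinh(bt*y))^2) \<longlongrightarrow> e) (at 0)"
proof (rule lhopital)
  show "((\<lambda>y. Cf y powr (2*e) - 1) \<longlongrightarrow> 0) (at 0)"
  proof -
    have "((\<lambda>y. Cf y powr (2*e) - 1) \<longlongrightarrow> Cf 0 powr (2*e) - 1) (at 0)"
      unfolding Cf_def by (auto intro!: tendsto_eq_intros)
    then show ?thesis by (simp add: Cf_def)
  qed
  show "((\<lambda>y. (sinh(bt*y))^2) \<longlongrightarrow> 0) (at 0)"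
  proof -
    have "((\<lambda>y. (sinh(bt*y))^2) \<longlongrightarrow> (sinh(bt*0))^2) (at 0)"
      by (auto intro!: tendsto_eq_intros)
    then show ?thesis by simp
  qed
  show "eventually (\<lambda>y. (sinh(bt*y))^2 \<noteq> 0) (at 0)"
    using ev_ne0 by eventually_elim (use bt_pos in auto)
  show "eventually (\<lambda>y. 2 * sinh(bt*y) * (bt * Cf y) \<noteq> 0) (at 0)"
    using ev_ne0 by eventually_elim (use bt_pos in \<open>simp add: Cf_ne0\<close>)
  show "eventually (\<lambda>y. ((\<lambda>y. Cf y powr (2*e) - 1) has_real_derivative
      (2*e) * Cf y powr (2*e - 1) * (bt * sinh (bt*y))) (at y)) (at 0)"
    by (rule always_eventually) (auto intro!: derivative_eq_intros Cf_deriv simp: Cf_pos)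
  show "eventually (\<lambda>y. ((\<lambda>y. (sinh(bt*y))^2) has_real_derivative
      2 * sinh(bt*y) * (bt * Cf y)) (at y)) (at 0)"
    by (rule always_eventually) (auto intro!: derivative_eq_intros simp: Cf_def)
  have "((\<lambda>y. e * Cf y powr (2*e - 2)) \<longlongrightarrow> e * Cf 0 powr (2*e - 2)) (at 0)"
    unfolding Cf_def by (auto intro!: tendsto_eq_intros)
  then have lim: "((\<lambda>y. e * Cf y powr (2*e - 2)) \<longlongrightarrow> e) (at 0)" by (simp add: Cf_def)
  show "((\<lambda>y. (2*e) * Cf y powr (2*e - 1) * (bt * sinh (bt*y)) / (2 * sinh(bt*y) * (bt * Cf y)))
      \<longlongrightarrow> e) (at 0)"
  proof (rule Lim_transform_eventually[OF lim])
    show "eventually (\<lambda>y. e * Cf y powr (2*e - 2) = (2*e) * Cf y powr (2*e - 1) * (bt * sinh (bt*y)) / (2 * sinh(bt*y) * (bt * Cf y))) (at 0)"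
      using ev_ne0
    proof eventually_elim
      case (elim y)
      have "Cf y powr (2*e - 1) = Cf y powr (2*e - 2) * Cf y"
        using powr_plus1[OF Cf_pos[of y], of "2*e-2"] by simp
      then show ?case using alg_q0[of "sinh (bt*y)" "Cf y" bt e "Cf y powr (2*e - 2)"] elim bt_pos Cf_pos[of y]
        by simp
    qed
  qed
qed

lemma qf_cont: "isCont (qf e) x"
proof (cases "x = 0")
  case True
  have "((\<lambda>y. bt * ((Cf y powr (2*e) - 1) / (sinh(bt*y))^2)) \<longlongrightarrow> bt * e) (at 0)"
    by (intro tendsto_mult tendsto_const qf_lim0)
  then have "(qf e \<longlongrightarrow> bt * e) (at 0)"
    by (rule Lim_transform_eventually) (use ev_ne0 in \<open>eventually_elim, simp add: qf_def\<close>)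
  then show ?thesis using True by (simp add: isCont_def qf_def)
next
  case False
  have ev: "eventually (\<lambda>y. y \<noteq> 0) (nhds x)" using False by (intro t1_space_nhds) auto
  have c1: "isCont (\<lambda>y. bt*(Cf y powr (2*e) - 1)/(sinh(bt*y))^2) x"
    using False bt_pos unfolding Cf_def by (auto intro!: continuous_intros)
  have c2: "eventually (\<lambda>y. qf e y = bt*(Cf y powr (2*e) - 1)/(sinh(bt*y))^2) (nhds x)"
    using ev by eventually_elim (simp add: qf_def)
  show ?thesis using isCont_cong[OF c2] c1 by simp
qed

lemma qf_even: "qf e (-x) = qf e x"
  by (simp add: qf_def Cf_def)

definition "Psi e = (SOME F. F 0 = 0 \<and> (\<forall>x. (F has_real_derivative qf e x) (at x)))"

lemma Psi: "Psi e 0 = 0" "\<And>x. (Psi e has_real_derivative qf e x) (at x)"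
proof -
  have "continuous_on UNIV (qf e)" by (simp add: continuous_at_imp_continuous_on qf_cont)
  from someI_ex[OF antideriv_exists[OF this]]
  show "Psi e 0 = 0" "\<And>x. (Psi e has_real_derivative qf e x) (at x)"
    unfolding Psi_def by blast+
qed

lemma Psi_odd: "Psi e (-x) = - Psi e x"
proof -
  have "\<And>y. ((\<lambda>y. Psi e y + Psi e (-y)) has_real_derivative 0) (at y)"
  proof -
    fix y
    have "((\<lambda>y. Psi e y + Psi e (-y)) has_real_derivative qf e y + qf e (-y) * (-1)) (at y)"
      by (auto intro!: derivative_eq_intros Psi(2) DERIV_chain2[of "Psi e"])
    then show "((\<lambda>y. Psi e y + Psi e (-y)) has_real_derivative 0) (at y)"
      by (simp add: qf_even)
  qed
  then have "Psi e x + Psi e (-x) = Psi e 0 + Psi e (-0)"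
    using DERIV_isconst_all[of "\<lambda>y. Psi e y + Psi e (-y)"] by blast
  then show ?thesis using Psi(1) by simp
qed

definition "Mf e x = Tf x * qf e x"
definition "DM e x = -2*bt*Tf x*Mf e x + 2*e*bt^2*Cf x powr (2*e-2) - bt*qf e x*(1 - Tf x^2)"

lemma TM: "Tf x * Mf e x = bt*(Cf x powr (2*e-2) - 1 + Tf x^2)"
proof (cases "x = 0")
  case True then show ?thesis by (simp add: Tf_def Cf_def Mf_def)
next
  case False
  have s: "sinh (bt*x) \<noteq> 0" using False bt_pos by simp
  have c: "Cf x powr (2*e) = Cf x powr (2*e-2) * Cf x ^ 2"
    using powr_plus2[OF Cf_pos[of x], of "2*e-2"] by simp
  have t: "Tf x = sinh (bt*x) / Cf x" by (simp add: Tf_def tanh_def Cf_def)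
  have "Tf x * Mf e x = (sinh (bt*x) / Cf x) * ((sinh (bt*x) / Cf x) * (bt*(Cf x powr (2*e-2) * Cf x ^ 2 - 1) / sinh (bt*x) ^ 2))"
    unfolding Mf_def qf_def t[symmetric] c[symmetric] using False by simp
  also have "\<dots> = bt * (Cf x powr (2*e-2) - 1 / Cf x ^ 2)"
    using alg_TM s Cf_pos[of x] by simp
  also have "1 / Cf x ^ 2 = 1 - Tf x ^ 2" by (simp add: Tf_sq)
  finally show ?thesis by (simp add: algebra_simps)
qed

end

lemma alg_M:
  fixes c s b k F :: real
  assumes "c > 0" "s \<noteq> 0" "c^2 = 1 + s^2"
  shows "b * ((2*k) * (F*c) * (b * s) * (c * s) - (F*c^2 - 1) * (b * s * s + c * (b * c))) / (c * s)^2
    = 2 * k * b^2 * F - 2 * b * (s / c) * (b * (F * c^2 - 1) / (c * s)) - b * (b * (F * c^2 - 1) / s^2) * (1 - (s / c)^2)"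
proof -
  have d: "c^2 - s^2 = 1" using assms(3) by simp
  have "1 - (s/c)^2 = (c^2 - s^2)/c^2" using assms(1) by (simp add: field_simps power_divide)
  then have e: "1 - (s/c)^2 = 1/c^2" using d by simp
  show ?thesis unfolding e using assms(1,2) apply (simp add: field_simps power2_eq_square)
    apply (insert assms(3)) by algebra
qed

context solp begin

definition "Sf x = sinh (bt*x)"
lemma Sf_deriv: "(Sf has_real_derivative bt * Cf x) (at x)"
  unfolding Sf_def Cf_def by (auto intro!: derivative_eq_intros)
lemma Cf_deriv': "(Cf has_real_derivative bt * Sf x) (at x)"
  unfolding Sf_def Cf_def by (auto intro!: derivative_eq_intros)

lemma Mf_deriv: "(Mf e has_real_derivative DM e x) (at x)"
proof (cases "x = 0")
  case True
  have "((\<lambda>y. Tf y * qf e y) has_real_derivative (bt * (1 - Tf 0 ^ 2)) * qf e 0) (at 0)"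
    by (rule deriv_prod_zero[OF Tf_0 Tf_deriv qf_cont])
  moreover have "DM e 0 = (bt * (1 - Tf 0 ^ 2)) * qf e 0"
    by (simp add: DM_def Mf_def Tf_0 qf_def Cf_def power2_eq_square)
  ultimately show ?thesis using True by (simp add: Mf_def[abs_def])
next
  case False
  define F where "F y = bt*(Cf y powr (2*e) - 1)/(Cf y * Sf y)" for y
  have eq: "Mf e y = F y" if "y \<noteq> 0" for y
  proof -
    have s: "sinh (bt*y) \<noteq> 0" using that bt_pos by simp
    show ?thesis unfolding Mf_def qf_def F_def Tf_def tanh_def Cf_def Sf_def
      using that s by (simp add: power2_eq_square field_simps)
  qed
  have s: "Sf x \<noteq> 0" using False bt_pos by (simp add: Sf_def)
  have "(F has_real_derivative
     bt * ((2*e) * Cf x powr (2*e-1) * (bt * Sf x) * (Cf x * Sf x)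
       - (Cf x powr (2*e) - 1) * (bt * Sf x * Sf x + Cf x * (bt * Cf x)))
       / (Cf x * Sf x)^2) (at x)"
    unfolding F_def
    by (auto intro!: derivative_eq_intros Cf_deriv' Sf_deriv simp: Cf_ne0 Cf_pos s power2_eq_square algebra_simps)
  moreover have "bt * ((2*e) * Cf x powr (2*e-1) * (bt * Sf x) * (Cf x * Sf x)
       - (Cf x powr (2*e) - 1) * (bt * Sf x * Sf x + Cf x * (bt * Cf x)))
       / (Cf x * Sf x)^2 = DM e x"
  proof -
    have c1: "Cf x powr (2*e-1) = Cf x powr (2*e-2) * Cf x"
      using powr_plus1[OF Cf_pos[of x], of "2*e-2"] by simp
    have c2: "Cf x powr (2*e) = Cf x powr (2*e-2) * Cf x ^ 2"
      using powr_plus2[OF Cf_pos[of x], of "2*e-2"] by simp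
    have t: "Tf x = Sf x / Cf x" by (simp add: Tf_def tanh_def Cf_def Sf_def)
    have q: "qf e x = bt*(Cf x powr (2*e-2) * Cf x ^ 2 - 1)/(Sf x)^2"
      using False by (simp add: qf_def c2 Sf_def)
    have m: "Mf e x = bt*(Cf x powr (2*e-2) * Cf x ^ 2 - 1)/(Cf x * Sf x)"
      using eq[OF False] by (simp add: F_def c2)
    have cs: "Cf x ^ 2 = 1 + Sf x ^ 2" using cosh_square_eq[of "bt*x"] by (simp add: Cf_def Sf_def)
    show ?thesis unfolding c1 c2 DM_def t q m
      using alg_M[OF Cf_pos s cs, of bt e "Cf x powr (2*e-2)"] by linarith
  qed
  ultimately have "(F has_real_derivative DM e x) (at x)" by simp
  then show ?thesis
    by (rule has_field_derivative_transform_within_open[where S="-{0}"]) (use False eq in auto)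
qed

end

lemma alg_h:
  fixes P T Psi q E2 b k e :: real
  assumes "T*(T*q) = b*(E2 - 1 + T^2)" "k = (1+b)*(1+2*b)"
  shows "(-P*T) * ((b*(1-T^2) - T^2)*Psi + T + T*q) + P*((b*(-(2*T*(b*(1-T^2)))) - 2*T*(b*(1-T^2)))*Psi + (b*(1-T^2) - T^2)*q + b*(1-T^2) + (-2*b*T*(T*q) + 2*e*b^2*E2 - b*q*(1-T^2)))
    = (1 - k*(1-T^2)) * (P*(T*Psi - 1)) + 2*b*(e*b-1-b)*(P*E2)"
  using assms by algebra

context solp begin

definition "hf e x = Pf x * (Tf x * Psi e x - 1)"
definition "h1f e x = Pf x * ((bt*(1 - Tf x^2) - Tf x^2) * Psi e x + Tf x + Mf e x)"

lemma hf_d1: "(hf e has_real_derivative h1f e x) (at x)"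
  unfolding hf_def[abs_def]
  by (auto intro!: derivative_eq_intros Pf_deriv Tf_deriv Psi(2) simp: h1f_def Mf_def algebra_simps power2_eq_square)

lemma hf_d2: "(h1f e has_real_derivative (1 - Vf x) * hf e x + 2*bt*(e*bt-1-bt)*(Pf x * Cf x powr (2*e-2))) (at x)"
proof -
  have "(h1f e has_real_derivative
     (-Pf x*Tf x) * ((bt*(1-Tf x^2) - Tf x^2)*Psi e x + Tf x + Mf e x) + Pf x*((bt*(-(2*Tf x*(bt*(1-Tf x^2)))) - 2*Tf x*(bt*(1-Tf x^2)))*Psi e x + (bt*(1-Tf x^2) - Tf x^2)*qf e x + bt*(1-Tf x^2) + DM e x)) (at x)"
    unfolding h1f_def[abs_def]
    by (auto intro!: derivative_eq_intros Pf_deriv Tf_deriv Psi(2) Mf_deriv simp: algebra_simps)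
  moreover have "(-Pf x*Tf x) * ((bt*(1-Tf x^2) - Tf x^2)*Psi e x + Tf x + Mf e x) + Pf x*((bt*(-(2*Tf x*(bt*(1-Tf x^2)))) - 2*Tf x*(bt*(1-Tf x^2)))*Psi e x + (bt*(1-Tf x^2) - Tf x^2)*qf e x + bt*(1-Tf x^2) + DM e x)
     = (1 - Vf x) * hf e x + 2*bt*(e*bt-1-bt)*(Pf x * Cf x powr (2*e-2))"
    using alg_h[of "Tf x" "qf e x" bt "Cf x powr (2*e-2)" ka "Pf x" "Psi e x" e] TM[of x e] ka_bt
    unfolding Mf_def DM_def hf_def Vf_def by simp
  ultimately show ?thesis by simp
qed

lemma hf_0: "hf e 0 = -1" by (simp add: hf_def Pf_0 Tf_0 Psi(1))
lemma h1f_0: "h1f e 0 = 0" by (simp add: h1f_def Pf_0 Tf_0 Psi(1) Mf_def)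

lemma Pf_even: "Pf (-x) = Pf x" by (simp add: Pf_def Cf_def)
lemma Tf_odd: "Tf (-x) = - Tf x" by (simp add: Tf_def)
lemma hf_even: "hf e (-x) = hf e x" by (simp add: hf_def Pf_even Tf_odd Psi_odd)

end

context solp begin

definition "nu = (p+1)/(p-1)"
definition "bb = p/(p-1)"

lemma nu_bt: "nu*bt = 1 + bt" using p1 by (simp add: nu_def bt_def field_simps)
lemma bb_bt: "bb*bt = p/2" using p1 by (simp add: bb_def bt_def field_simps)
lemma bb_aa: "2*bb - 2 - aa = 0" using p1 by (simp add: bb_def aa_def field_simps)
lemma nu_aa: "2*nu = 2*aa + 2" using p1 by (simp add: nu_def aa_def field_simps)
lemma bb_aa2: "2*bb = aa + 2" using p1 by (simp add: bb_def aa_def field_simps)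

lemma sol_h3: "sol2 (hf nu) (h1f nu) 0"
  unfolding sol2_def using hf_d1 hf_d2[of nu] by (simp add: nu_bt)

lemma sol_hb: "sol2 (hf bb) (h1f bb) bt"
  unfolding sol2_def
proof
  fix x
  have "Pf x * Cf x powr (2*bb-2) = 1"
    unfolding Pf_def using Cf_pos[of x] by (simp add: powr_add[symmetric] bb_aa)
  moreover have "2*bt*(bb*bt-1-bt) = - bt"
  proof -
    have "2*bt*(bb*bt-1-bt) = 2*bt*(p/2-1-bt)" by (simp add: bb_bt)
    also have "\<dots> = - bt" by (simp add: bt_def field_simps)
    finally show ?thesis .
  qed
  ultimately show "(hf bb has_real_derivative h1f bb x) (at x) \<and>
         (h1f bb has_real_derivative (1 - Vf x) * hf bb x - bt) (at x)"
    using hf_d1 hf_d2[of bb x] by simp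
qed

lemma sol2_scale: "sol2 u du c \<Longrightarrow> sol2 (\<lambda>x. r * u x) (\<lambda>x. r * du x) (r*c)"
  unfolding sol2_def by (auto intro!: derivative_eq_intros simp: algebra_simps)

lemma sol2_lin4:
  assumes "sol2 f1 d1 a1" "sol2 f2 d2 a2" "sol2 f3 d3 a3" "sol2 f4 d4 a4"
  shows "sol2 (\<lambda>x. r1 * f1 x + r2 * f2 x + r3 * f3 x + r4 * f4 x) (\<lambda>x. r1 * d1 x + r2 * d2 x + r3 * d3 x + r4 * d4 x) (r1 * a1 + r2 * a2 + r3 * a3 + r4 * a4)"
  using assms unfolding sol2_def by (auto intro!: derivative_eq_intros simp: algebra_simps)

definition "h2 x = aa * hf bb x"
definition "dh2 x = aa * h1f bb x"
lemma sol_h2: "sol2 h2 dh2 1"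
  using sol2_scale[OF sol_hb, of aa] aa_bt unfolding h2_def[abs_def] dh2_def[abs_def] by simp

definition "dphi x = -AA * (Pf x * Tf x)"
definition "d2phi x = -AA * (Pf x * (bt*(1-Tf x^2) - Tf x^2))"

lemma sol_dphi: "sol2 dphi d2phi 0"
  unfolding sol2_def
proof
  fix x
  show "(dphi has_real_derivative d2phi x) (at x) \<and> (d2phi has_real_derivative (1 - Vf x) * dphi x - 0) (at x)"
    unfolding dphi_def[abs_def] d2phi_def[abs_def] Vf_def ka_bt
    by (auto intro!: derivative_eq_intros Pf_deriv Tf_deriv simp: algebra_simps power2_eq_square)
qed

lemma deriv_phi: "deriv (phi p) = dphi"
proof
  fix x
  have "phi p = (\<lambda>x. AA * Pf x)" by (simp add: phi_eq[abs_def])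
  moreover have "((\<lambda>x. AA * Pf x) has_real_derivative dphi x) (at x)"
    unfolding dphi_def by (auto intro!: derivative_eq_intros Pf_deriv)
  ultimately show "deriv (phi p) x = dphi x" by (simp add: DERIV_imp_deriv)
qed

lemma AA_pos: "AA > 0" using p1 by (simp add: AA_def)

lemma dh2_0: "dh2 0 = 0" by (simp add: dh2_def h1f_0)
lemma h2_0: "h2 0 = -aa" by (simp add: h2_def hf_0)
lemma d2phi_0: "d2phi 0 = -AA*bt" by (simp add: d2phi_def Pf_0 Tf_0)
lemma dphi_0: "dphi 0 = 0" by (simp add: dphi_def Tf_0)

lemma h2_even: "h2 (-x) = h2 x" by (simp add: h2_def hf_even)
lemma dphi_odd: "dphi (-x) = - dphi x" by (simp add: dphi_def Pf_even Tf_odd)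

lemma bt_top: "filterlim (\<lambda>x. bt * x) at_top at_top"
  by (rule filterlim_tendsto_pos_mult_at_top[OF tendsto_const bt_pos filterlim_ident])
lemma Cf_top: "filterlim Cf at_top at_top"
  unfolding Cf_def by (rule filterlim_compose[OF cosh_real_at_top bt_top])
lemma Tf_top: "(Tf \<longlongrightarrow> 1) at_top"
  unfolding Tf_def by (rule filterlim_compose[OF tanh_real_at_top bt_top])
lemma Pf_top: "(Pf \<longlongrightarrow> 0) at_top"
  unfolding Pf_def by (rule tendsto_neg_powr[OF _ Cf_top]) (use aa_pos in simp)
lemma dphi_top: "(dphi \<longlongrightarrow> 0) at_top"
proof -
  have "((\<lambda>x. -AA * (Pf x * Tf x)) \<longlongrightarrow> -AA * (0 * 1)) at_top"
    by (intro tendsto_intros Pf_top Tf_top)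
  then show ?thesis by (simp add: dphi_def[abs_def])
qed
lemma dphi_bot: "(dphi \<longlongrightarrow> 0) at_bot"
proof -
  have "((\<lambda>x. - dphi x) \<longlongrightarrow> - 0) at_top" by (intro tendsto_intros dphi_top)
  then show ?thesis unfolding filterlim_at_bot_mirror by (simp add: dphi_odd)
qed

end

lemma asymp1: "filterlim (\<lambda>x::real. exp x - exp (-x) - 2*K*x*exp(-x) - D) at_top at_top"
  by real_asymp

lemma asymp2: "filterlim (\<lambda>x::real. exp (2*x) - 1 - 2*K*x) at_top at_top"
  by real_asymp

context solp begin

definition "KK = 2 powr (2*aa)"
lemma KK_ge1: "KK \<ge> 1" using aa_pos by (simp add: KK_def ge_one_powr_ge_zero)

lemma cosh_bounds: "(y::real) \<ge> 0 \<Longrightarrow> exp y / 2 \<le> cosh y \<and> cosh y \<le> exp y"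
proof -
  assume "y \<ge> 0"
  have c: "cosh y = (exp y + exp (-y)) / 2" by (simp add: cosh_def)
  have "exp (-y) \<le> exp y" using \<open>y \<ge> 0\<close> by simp
  then show ?thesis unfolding c using exp_gt_zero[of "-y"] by simp
qed

lemma q_lower:
  assumes "y \<ge> 0" shows "qf nu y \<ge> bt * (exp (2*y) / KK - 1)"
proof (cases "y = 0")
  case True
  have "exp (2*y) / KK - 1 \<le> 0" using True KK_ge1 by simp
  moreover have "qf nu y \<ge> 0" using True bt_pos p1 by (simp add: qf_def nu_def)
  ultimately show ?thesis using bt_pos by (smt (verit) mult_nonneg_nonpos)
next
  case False
  then have ypos: "y > 0" using assms by simp
  define c where "c = Cf y"
  define s where "s = Sf y"
  have cpos: "c > 0" by (simp add: c_def Cf_pos)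
  have c1: "c \<ge> 1" by (simp add: c_def Cf_ge1)
  have cs: "s^2 = c^2 - 1" using cosh_square_eq[of "bt*y"] by (simp add: c_def s_def Cf_def Sf_def)
  have spos: "s^2 > 0" using ypos bt_pos by (simp add: s_def Sf_def)
  have q: "qf nu y = bt * (c powr (2*aa) * c^2 - 1) / s^2"
    using False powr_plus2[OF cpos, of "2*aa"] by (simp add: qf_def c_def s_def Sf_def nu_aa)
  have ca: "c powr (2*aa) \<ge> 1" using c1 aa_pos by (simp add: ge_one_powr_ge_zero)
  have "(c powr (2*aa) * c^2 - 1) / s^2 \<ge> c powr (2*aa) - 1"
  proof -
    have "c^2 \<ge> 1" using c1 by (simp add: one_le_power)
    then have "(c powr (2*aa) - 1) * s^2 \<le> c powr (2*aa) * c^2 - 1"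
      unfolding cs using ca by (simp add: algebra_simps)
    then show ?thesis using spos by (simp add: le_divide_eq)
  qed
  moreover have "c powr (2*aa) \<ge> exp (2*y) / KK"
  proof -
    have "exp (bt*y) / 2 \<le> c" using cosh_bounds[of "bt*y"] ypos bt_pos by (simp add: c_def Cf_def)
    then have "(exp (bt*y) / 2) powr (2*aa) \<le> c powr (2*aa)"
      using aa_pos by (intro powr_mono2) auto
    moreover have "(exp (bt*y) / 2) powr (2*aa) = exp (2*y) / KK"
      using aa_bt by (simp add: powr_divide exp_powr_real KK_def algebra_simps)
    ultimately show ?thesis by simp
  qed
  ultimately have "(c powr (2*aa) * c^2 - 1) / s^2 \<ge> exp (2*y) / KK - 1" by simp
  then have "bt * (exp (2*y) / KK - 1) \<le> bt * ((c powr (2*aa) * c^2 - 1) / s^2)"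
    using bt_pos by (intro mult_left_mono) auto
  then show ?thesis unfolding q by simp
qed

definition "LL x = bt*(exp (2*x) - 1)/(2*KK) - bt*x"

lemma Psi_lower: assumes "x \<ge> 0" shows "Psi nu x \<ge> LL x"
proof -
  define G where "G y = Psi nu y - LL y" for y
  have "G 0 \<le> G x"
  proof (rule DERIV_nonneg_imp_nondecreasing[of 0 x G])
    show "0 \<le> x" by fact
    fix y assume y: "0 \<le> y" "y \<le> x"
    have "(G has_real_derivative qf nu y - bt * (exp (2*y) / KK - 1)) (at y)"
      unfolding G_def[abs_def] LL_def using KK_ge1
      by (auto intro!: derivative_eq_intros Psi(2) simp: field_simps)
    moreover have "qf nu y - bt * (exp (2*y) / KK - 1) \<ge> 0" using q_lower[OF y(1)] by simp
    ultimately show "\<exists>d. (G has_real_derivative d) (at y) \<and> d \<ge> 0" by blast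
  qed
  then show ?thesis by (simp add: G_def LL_def Psi(1))
qed

lemma h3_top: "filterlim (hf nu) at_top at_top"
proof -
  define B where "B x = (bt/(4*KK)) * (exp x - exp (-x) - 2*KK*x*exp(-x) - 4*KK/bt)" for x
  have Btop: "filterlim B at_top at_top"
    unfolding B_def[abs_def]
    by (rule filterlim_tendsto_pos_mult_at_top[OF tendsto_const _ asymp1]) (use bt_pos KK_ge1 in simp)
  have LLtop: "filterlim LL at_top at_top"
  proof -
    have "filterlim (\<lambda>x. (bt/(2*KK)) * (exp (2*x) - 1 - 2*KK*x)) at_top at_top"
      by (rule filterlim_tendsto_pos_mult_at_top[OF tendsto_const _ asymp2[of KK]]) (use bt_pos KK_ge1 in simp)
    moreover have "(\<lambda>x. (bt/(2*KK)) * (exp (2*x) - 1 - 2*KK*x)) = LL"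
      using bt_pos KK_ge1 by (intro ext) (simp add: LL_def field_simps)
    ultimately show ?thesis by simp
  qed
  have ev: "eventually (\<lambda>x. x \<ge> 0 \<and> Tf x \<ge> 1/2 \<and> LL x \<ge> 0) at_top"
  proof -
    have "eventually (\<lambda>x. Tf x > 1/2) at_top" using Tf_top by (rule order_tendstoD) simp
    moreover have "eventually (\<lambda>x. LL x \<ge> 0) at_top" using LLtop by (simp add: filterlim_at_top)
    moreover have "eventually (\<lambda>x::real. x \<ge> 0) at_top" by (rule eventually_ge_at_top)
    ultimately show ?thesis by eventually_elim auto
  qed
  have "eventually (\<lambda>x. B x \<le> hf nu x) at_top"
    using ev
  proof eventually_elim
    case (elim x)
    then have x0: "x \<ge> 0" and T: "Tf x \<ge> 1/2" and L: "LL x \<ge> 0" by auto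
    have P1: "Pf x \<le> 1"
      using powr_mono2'[of "-aa" 1 "Cf x"] aa_pos Cf_ge1[of x] by (simp add: Pf_def)
    have P2: "Pf x \<ge> exp (-x)"
    proof -
      have "Cf x \<le> exp (bt*x)" using cosh_bounds[of "bt*x"] x0 bt_pos by (simp add: Cf_def)
      then have "exp (bt*x) powr (-aa) \<le> Pf x"
        unfolding Pf_def using aa_pos Cf_pos[of x] by (intro powr_mono2') auto
      moreover have "exp (bt*x) powr (-aa) = exp (-x)" using aa_bt by (simp add: exp_powr_real algebra_simps)
      ultimately show ?thesis by simp
    qed
    have "hf nu x = Pf x * Tf x * Psi nu x - Pf x" by (simp add: hf_def algebra_simps)
    also have "\<dots> \<ge> Pf x * Tf x * LL x - 1"
    proof -
      have "Pf x * Tf x \<ge> 0" using Pf_pos[of x] T by simp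
      then have "Pf x * Tf x * LL x \<le> Pf x * Tf x * Psi nu x"
        using Psi_lower[OF x0] by (simp add: mult_left_mono)
      then show ?thesis using P1 by simp
    qed
    moreover have "Pf x * Tf x * LL x \<ge> exp (-x) * (1/2) * LL x"
    proof -
      have "exp (-x) * (1/2) \<le> Pf x * Tf x" using P2 T Pf_pos[of x] by (intro mult_mono) auto
      then show ?thesis by (rule mult_right_mono[OF _ L])
    qed
    moreover have "exp (-x) * (1/2) * LL x - 1 = B x"
    proof -
      have "exp (-x) * exp (2*x) = exp x" by (simp add: exp_add[symmetric])
      then show ?thesis using bt_pos KK_ge1 unfolding B_def LL_def
        by (simp add: field_simps)
    qed
    ultimately show ?case by simp
  qed
  then show ?thesis using filterlim_at_top_mono[OF Btop] by blast
qed

end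

lemma powr_plus3: "(x::real) > 0 \<Longrightarrow> x powr (a+3) = x powr a * x^3"
  by (simp add: powr_add powr_numeral)

lemma alg_r:
  fixes c s E a b :: real
  assumes "c > 0" "s > 0" "E > 0" "a * b = 1"
  shows "b * (1 / (s / c)) ^ 3 * (1 - 1 / (E * c ^ 3)) = b * (E * c ^ 3 - 1) / s^2 / (a * E * (b * s))"
proof -
  have b: "b \<noteq> 0" using assms(4) by auto
  have a: "a = 1 / b" using assms(4) b by (simp add: field_simps)
  show ?thesis unfolding a using assms(1-3) b by (simp add: field_simps power2_eq_square power3_eq_cube)
qed

context solp begin

lemma ev_pos: "eventually (\<lambda>x::real. x > 0) at_top" by (rule eventually_gt_at_top)

lemma ratio_lim: "((\<lambda>x. Psi bb x / Cf x powr aa) \<longlongrightarrow> bt) at_top"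
proof (rule lhospital_at_top_at_top)
  have "filterlim (\<lambda>x. inverse (Pf x)) at_top at_top"
    by (rule filterlim_inverse_at_top[OF Pf_top]) (simp add: Pf_pos)
  moreover have "(\<lambda>x. inverse (Pf x)) = (\<lambda>x. Cf x powr aa)"
    by (intro ext) (simp add: Pf_def powr_minus)
  ultimately show "filterlim (\<lambda>x. Cf x powr aa) at_top at_top" by simp
  show "eventually (\<lambda>x. aa * Cf x powr (aa - 1) * (bt * Sf x) \<noteq> 0) at_top"
    using ev_pos by eventually_elim (use aa_pos bt_pos in \<open>simp add: Sf_def Cf_ne0\<close>)
  show "eventually (\<lambda>x. (Psi bb has_real_derivative qf bb x) (at x)) at_top"
    by (rule always_eventually) (simp add: Psi(2))
  show "eventually (\<lambda>x. ((\<lambda>x. Cf x powr aa) has_real_derivative aa * Cf x powr (aa - 1) * (bt * Sf x)) (at x)) at_top"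
    by (rule always_eventually) (auto intro!: derivative_eq_intros Cf_deriv' simp: Cf_pos)
  have lim: "((\<lambda>x. bt * (1 / Tf x)^3 * (1 - Cf x powr (-(aa+2)))) \<longlongrightarrow> bt * (1/1)^3 * (1 - 0)) at_top"
    by (intro tendsto_intros Tf_top tendsto_neg_powr[OF _ Cf_top]) (use aa_pos in auto)
  have lim': "((\<lambda>x. bt * (1 / Tf x)^3 * (1 - Cf x powr (-(aa+2)))) \<longlongrightarrow> bt) at_top"
    using lim by simp
  show "((\<lambda>x. qf bb x / (aa * Cf x powr (aa - 1) * (bt * Sf x))) \<longlongrightarrow> bt) at_top"
  proof (rule Lim_transform_eventually[OF lim'])
    show "eventually (\<lambda>x. bt * (1 / Tf x)^3 * (1 - Cf x powr (-(aa+2))) = qf bb x / (aa * Cf x powr (aa - 1) * (bt * Sf x))) at_top"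
      using ev_pos
    proof eventually_elim
      case (elim x)
      have cpos: "Cf x > 0" by (simp add: Cf_pos)
      have spos: "Sf x > 0" using elim bt_pos by (simp add: Sf_def)
      have Epos: "Cf x powr (aa - 1) > 0" using cpos by simp
      have t: "Tf x = Sf x / Cf x" by (simp add: Tf_def tanh_def Cf_def Sf_def)
      have e1: "Cf x powr (2*bb) = Cf x powr (aa - 1) * Cf x^3"
      proof -
        have "aa - 1 + 3 = aa + 2" by simp
        then show ?thesis unfolding bb_aa2 using powr_plus3[OF cpos, of "aa-1"] by metis
      qed
      have e2: "Cf x powr (-(aa+2)) = 1 / (Cf x powr (aa - 1) * Cf x^3)"
        unfolding powr_minus_divide by (subst bb_aa2[symmetric]) (simp add: e1)
      have q: "qf bb x = bt * (Cf x powr (aa - 1) * Cf x^3 - 1) / Sf x^2"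
        using elim e1 by (simp add: qf_def Sf_def)
      show ?case unfolding q t e2
        using alg_r[OF cpos spos Epos aa_bt] by (simp add: mult.assoc)
    qed
  qed
qed

lemma hb_top: "(hf bb \<longlongrightarrow> bt) at_top"
proof -
  have "((\<lambda>x. Tf x * (Psi bb x / Cf x powr aa) - Pf x) \<longlongrightarrow> 1 * bt - 0) at_top"
    by (intro tendsto_intros Tf_top ratio_lim Pf_top)
  moreover have "(\<lambda>x. Tf x * (Psi bb x / Cf x powr aa) - Pf x) = hf bb"
    by (intro ext) (simp add: hf_def Pf_def powr_minus_divide algebra_simps)
  ultimately show ?thesis by simp
qed

lemma h2_top: "(h2 \<longlongrightarrow> 1) at_top"
proof -
  have "((\<lambda>x. aa * hf bb x) \<longlongrightarrow> aa * bt) at_top" by (intro tendsto_intros hb_top)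
  then show ?thesis using aa_bt by (simp add: h2_def[abs_def])
qed

lemma h2_bot: "(h2 \<longlongrightarrow> 1) at_bot"
  unfolding filterlim_at_bot_mirror using h2_top by (simp add: h2_even)

lemma h3_bot: "filterlim (hf nu) at_top at_bot"
  unfolding filterlim_at_bot_mirror using h3_top by (simp add: hf_even)

end

context solp begin

lemma span:
  assumes "Lsol p u"
  shows "\<exists>c1 c2 c3. u = (\<lambda>x. c1 * deriv (phi p) x + c2 * h2 x + c3 * hf nu x)"
proof -
  obtain c where c: "sol2 u (deriv u) c" using sol2_of_Lsol[OF assms] by blast
  define al where "al = deriv u 0 / d2phi 0"
  define ga where "ga = c * h2 0 - u 0"
  have d2: "d2phi 0 \<noteq> 0" using AA_pos bt_pos by (simp add: d2phi_0)
  have w: "sol2 (\<lambda>x. 1 * u x + (-c) * h2 x + (-al) * dphi x + (-ga) * hf nu x)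
     (\<lambda>x. 1 * deriv u x + (-c) * dh2 x + (-al) * d2phi x + (-ga) * h1f nu x)
     (1 * c + (-c) * 1 + (-al) * 0 + (-ga) * 0)"
    by (rule sol2_lin4[OF c sol_h2 sol_dphi sol_h3])
  define W where "W = (\<lambda>x. 1 * u x + (-c) * h2 x + (-al) * dphi x + (-ga) * hf nu x)"
  define DW where "DW = (\<lambda>x. 1 * deriv u x + (-c) * dh2 x + (-al) * d2phi x + (-ga) * h1f nu x)"
  have "W x = 0" for x
  proof (rule sol2_unique[of W DW])
    show "sol2 W DW 0" using w unfolding W_def DW_def by simp
    show "W 0 = 0" by (simp add: W_def ga_def dphi_0 hf_0)
    show "DW 0 = 0" using d2 by (simp add: DW_def al_def dh2_0 h1f_0)
  qed
  then have "u = (\<lambda>x. al * deriv (phi p) x + c * h2 x + ga * hf nu x)"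
    by (intro ext) (simp add: W_def deriv_phi algebra_simps)
  then show ?thesis by blast
qed

lemma span_rev: "Lsol p (\<lambda>x. c1 * deriv (phi p) x + c2 * h2 x + c3 * hf nu x)"
proof -
  have "sol2 (\<lambda>x. c1 * dphi x + c2 * h2 x + c3 * hf nu x + 0 * hf nu x)
     (\<lambda>x. c1 * d2phi x + c2 * dh2 x + c3 * h1f nu x + 0 * h1f nu x) (c1 * 0 + c2 * 1 + c3 * 0 + 0 * 0)"
    by (rule sol2_lin4[OF sol_dphi sol_h2 sol_h3 sol_h3])
  then show ?thesis unfolding deriv_phi by (auto intro: Lsol_of_sol2)
qed

lemma no_sol:
  "\<not> (\<exists>u. Lsol p u \<and> (u \<longlongrightarrow> 1) at_bot \<and> filterlim (\<lambda>x. \<bar>u x\<bar>) at_top at_top)"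
proof
  assume "\<exists>u. Lsol p u \<and> (u \<longlongrightarrow> 1) at_bot \<and> filterlim (\<lambda>x. \<bar>u x\<bar>) at_top at_top"
  then obtain u where L: "Lsol p u" and b: "(u \<longlongrightarrow> 1) at_bot" and t: "filterlim (\<lambda>x. \<bar>u x\<bar>) at_top at_top"
    by blast
  obtain c1 c2 c3 where u: "u = (\<lambda>x. c1 * dphi x + c2 * h2 x + c3 * hf nu x)"
    using span[OF L] unfolding deriv_phi by blast
  show False
  proof (cases "c3 = 0")
    case True
    have A: "((\<lambda>x. \<bar>c1 * dphi x + c2 * h2 x\<bar>) \<longlongrightarrow> \<bar>c1 * 0 + c2 * 1\<bar>) at_top"
      by (intro tendsto_intros dphi_top h2_top)
    have B: "filterlim (\<lambda>x. \<bar>c1 * dphi x + c2 * h2 x\<bar>) at_infinity at_top"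
      using t \<open>c3 = 0\<close> unfolding u by (simp add: filterlim_at_top_imp_at_infinity)
    show False
      using not_tendsto_and_filterlim_at_infinity[OF _ A B] by simp
  next
    case False
    have "((\<lambda>x. (u x - c1 * dphi x - c2 * h2 x) / c3) \<longlongrightarrow> (1 - c1 * 0 - c2 * 1) / c3) at_bot"
      by (intro tendsto_intros b dphi_bot h2_bot False)
    moreover have "(\<lambda>x. (u x - c1 * dphi x - c2 * h2 x) / c3) = hf nu"
      using False unfolding u by (intro ext) simp
    ultimately have A: "(hf nu \<longlongrightarrow> (1 - c1 * 0 - c2 * 1) / c3) at_bot" by simp
    have B: "filterlim (hf nu) at_infinity at_bot"
      using h3_bot by (simp add: filterlim_at_top_imp_at_infinity)
    show False
      using not_tendsto_and_filterlim_at_infinity[OF _ A B] by simp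
  qed
qed

end

theorem mainTheorem6:
  fixes p :: real
  assumes "1 < p" and "p < 5"
  shows "(\<exists>h2 h3. Lsol p h2 \<and> Lsol p h3 \<and>
            (\<forall>x. h2 (- x) = h2 x) \<and> (\<forall>x. h3 (- x) = h3 x) \<and>
            (h2 \<longlongrightarrow> 1) at_top \<and> filterlim h3 at_top at_top \<and>
            (\<forall>u. Lsol p u \<longleftrightarrow>
               (\<exists>c1 c2 c3. u = (\<lambda>x. c1 * deriv (phi p) x + c2 * h2 x + c3 * h3 x))))
         \<and> \<not> (\<exists>u. Lsol p u \<and> (u \<longlongrightarrow> 1) at_bot \<and> filterlim (\<lambda>x. \<bar>u x\<bar>) at_top at_top)"
proof -
  interpret S: solp p using assms(1) by unfold_locales
  have "Lsol p S.h2" by (rule S.Lsol_of_sol2[OF S.sol_h2])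
  moreover have "Lsol p (S.hf S.nu)" by (rule S.Lsol_of_sol2[OF S.sol_h3])
  moreover have "\<forall>x. S.h2 (- x) = S.h2 x" by (simp add: S.h2_even)
  moreover have "\<forall>x. S.hf S.nu (- x) = S.hf S.nu x" by (simp add: S.hf_even)
  moreover have "\<forall>u. Lsol p u \<longleftrightarrow>
               (\<exists>c1 c2 c3. u = (\<lambda>x. c1 * deriv (phi p) x + c2 * S.h2 x + c3 * S.hf S.nu x))"
    using S.span S.span_rev by blast
  ultimately show ?thesis using S.h2_top S.h3_top S.no_sol by blast
qed

end
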